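(* Suppose Assumption A holds and Assumption B holds for some $p\ge2$. Let $\{(x^k,m^k)\}_{k\ge0}$ be generated by Algorithm 1 with $q=p-1$, step sizes $\{\eta_k\}_{k\ge0}$, and parameters satisfying, for all $k\ge0$, $\sum_{t=1}^{p-1}\theta_{k,t}/\gamma_{k,t}^{j}=1$ for $j=1,\dots,p-1$ and $\sum_{t=1}^{p-1}\theta_{k,t}\in(0,1)$. Let $\{p_k\}_{k\ge0}$ be a positive sequence with \[ \Big(1-\sum_{t=1}^{p-1}\theta_{k,t}\Big)p_{k+1}\le\Big(1-\frac{1}{p+1}\sum_{t=1}^{p-1}\theta_{k,t}\Big)p_k\qquad\forall k\ge0, \] and define $P_k=f(x^k)+p_k\|m^k-\nabla f(x^k)\|^2$. Then for all $k\ge0$, \[ \mathbb{E}_{\xi^{k+1}}[P_{k+1}]\le P_k-\eta_k\|\nabla f(x^k)\|+\frac{L_1}{2}\eta_k^2+\frac{(p+1)\eta_k^2}{p_k\sum_{t=1}^{p-1}\theta_{k,t}}+\frac{pL_p^2\eta_k^{2p}p_{k+1}}{(p!)^2\sum_{t=1}^{p-1}\theta_{k,t}}\Big(1+\sum_{t=1}^{p-1}\frac{\theta_{k,t}^2}{\gamma_{k,t}^{2p}}\Big)+(p-1)\sigma^2p_{k+1}\sum_{t=1}^{p-1}\theta_{k,t}^2 . \]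
   Context: Problem: minimize $f:\mathbb{R}^n\to\mathbb{R}$, where only a stochastic gradient estimator $G(\cdot;\xi)$ is accessible, $\xi$ being a random variable with sample space $\Xi$. $\|\cdot\|$ is the Euclidean norm. Assumption A: (a) there is a finite $f_{\mathrm{low}}$ with $f(x)\ge f_{\mathrm{low}}$ for all $x$; (b) there is $L_1>0$ with $\|\nabla f(y)-\nabla f(x)\|\le L_1\|y-x\|$ for all $x,y$; (c) $\mathbb{E}_\xi[G(x;\xi)]=\nabla f(x)$ and $\mathbb{E}_\xi[\|G(x;\xi)-\nabla f(x)\|^2]\le\sigma^2$ for all $x$, for some $\sigma>0$. Assumption B: $f$ is $p$ times continuously differentiable for some $p\ge2$ and there is $L_p>0$ with $\|D^pf(y)-D^pf(x)\|_{(p)}\le L_p\|y-x\|$ for all $x,y$, where $D^pf(x)$ is the $p$th derivative as a symmetric $p$-linear form and $\|\mathcal{T}\|_{(p)}=\max\{\mathcal{T}[h_1,\dots,h_p]:\|h_i\|\le 1\}$. Algorithm 1 (SFOM with multi-extrapolated momentum): inputs $x^0\in\mathbb{R}^n$, step sizes $\eta_k>0$, an integer $q\ge1$, extrapolation parameters $\gamma_{k,t}\in(0,1)$ and weighting parameters $\theta_{k,t}\in\mathbb{R}$ ($1\le t\le q$, $k\ge0$) with $\sum_{t=1}^q\theta_{k,t}\in(0,1)$ for all $k\ge0$. Initialize $x^{-1}=x^0$, $m^{-1}=0$, $(\gamma_{-1,t},\theta_{-1,t})=(1,1/q)$ for all $t$. For $k=0,1,2,\dots$: $z^{k,t}=x^k+\frac{1-\gamma_{k-1,t}}{\gamma_{k-1,t}}(x^k-x^{k-1})$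 for $1\le t\le q$; $m^k=(1-\sum_{t=1}^q\theta_{k-1,t})m^{k-1}+\sum_{t=1}^q\theta_{k-1,t}G(z^{k,t};\xi^k)$; $x^{k+1}=x^k-\eta_k m^k/\|m^k\|$. Here $\xi^0,\xi^1,\dots$ are independent samples of $\xi$ (and $m^k\neq0$ is implicitly assumed). $\mathbb{E}_{\xi^{k+1}}[\cdot]$ denotes expectation with respect to $\xi^{k+1}$ conditional on $\xi^0,\dots,\xi^k$. *)

theory Defs
  imports "HOL-Probability.Probability"
begin

text \<open>Iterated (Frechet) derivative as a k-linear form:
  hderiv k f x h = D^k f(x)[h 0, ..., h (k-1)].\<close>
fun hderiv :: "nat \<Rightarrow> ('a::euclidean_space \<Rightarrow> real) \<Rightarrow> 'a \<Rightarrow> (nat \<Rightarrow> 'a) \<Rightarrow> real" where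
  "hderiv 0 f x h = f x"
| "hderiv (Suc k) f x h = frechet_derivative (\<lambda>y. hderiv k f y h) (at x) (h k)"

definition Cp :: "nat \<Rightarrow> ('a::euclidean_space \<Rightarrow> real) \<Rightarrow> bool" where
  "Cp p f \<longleftrightarrow> (\<forall>k<p. \<forall>h x. (\<lambda>y. hderiv k f y h) differentiable (at x))
              \<and> (\<forall>h. continuous_on UNIV (\<lambda>y. hderiv p f y h))"

definition pnorm :: "nat \<Rightarrow> ((nat \<Rightarrow> 'a::real_normed_vector) \<Rightarrow> real) \<Rightarrow> real" where
  "pnorm p T = Sup {T h | h. \<forall>i<p. norm (h i) \<le> 1}"

text \<open>Algorithm 1. State after k steps: (x^k, x^(k-1), m^(k-1)).
  Indices t range over {1..q}; parameters gam k t, th k t; the k-th step uses index k-1,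
  with (gamma_{-1,t}, theta_{-1,t}) = (1, 1/q).\<close>
definition gprev :: "(nat \<Rightarrow> nat \<Rightarrow> real) \<Rightarrow> nat \<Rightarrow> nat \<Rightarrow> real" where
  "gprev gam k t = (if k = 0 then 1 else gam (k - 1) t)"

definition tprev :: "nat \<Rightarrow> (nat \<Rightarrow> nat \<Rightarrow> real) \<Rightarrow> nat \<Rightarrow> nat \<Rightarrow> real" where
  "tprev q th k t = (if k = 0 then 1 / real q else th (k - 1) t)"

definition mom_step ::
  "('a::euclidean_space \<Rightarrow> 'c \<Rightarrow> 'a) \<Rightarrow> nat \<Rightarrow> (nat \<Rightarrow> nat \<Rightarrow> real) \<Rightarrow> (nat \<Rightarrow> nat \<Rightarrow> real)
    \<Rightarrow> nat \<Rightarrow> 'c \<Rightarrow> 'a \<Rightarrow> 'a \<Rightarrow> 'a \<Rightarrow> 'a" where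
  "mom_step G q gam th k \<xi> x xp mp =
     (1 - (\<Sum>t\<in>{1..q}. tprev q th k t)) *\<^sub>R mp
     + (\<Sum>t\<in>{1..q}. tprev q th k t *\<^sub>R
          G (x + ((1 - gprev gam k t) / gprev gam k t) *\<^sub>R (x - xp)) \<xi>)"

primrec alg_state ::
  "('a::euclidean_space \<Rightarrow> 'c \<Rightarrow> 'a) \<Rightarrow> 'a \<Rightarrow> (nat \<Rightarrow> real) \<Rightarrow> nat \<Rightarrow> (nat \<Rightarrow> nat \<Rightarrow> real)
    \<Rightarrow> (nat \<Rightarrow> nat \<Rightarrow> real) \<Rightarrow> (nat \<Rightarrow> 'c) \<Rightarrow> nat \<Rightarrow> 'a \<times> 'a \<times> 'a" where
  "alg_state G x0 \<eta> q gam th s 0 = (x0, x0, 0)"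
| "alg_state G x0 \<eta> q gam th s (Suc k) =
     (case alg_state G x0 \<eta> q gam th s k of (x, xp, mp) \<Rightarrow>
        let m = mom_step G q gam th k (s k) x xp mp
        in (x - (\<eta> k / norm m) *\<^sub>R m, x, m))"

text \<open>x^k along the sample path s (s k = xi^k).\<close>
definition xseq where
  "xseq G x0 \<eta> q gam th s k = fst (alg_state G x0 \<eta> q gam th s k)"

definition mseq where
  "mseq G x0 \<eta> q gam th s k =
     (case alg_state G x0 \<eta> q gam th s k of (x, xp, mp) \<Rightarrow> mom_step G q gam th k (s k) x xp mp)"

end

theory Submission
  imports Defs
begin

lemma hderiv_local:
  "(\<And>i. i < k \<Longrightarrow> h i = h' i) \<Longrightarrow> hderiv k f x h = hderiv k f x h'"
proof (induction k arbitrary: x)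
  case 0 then show ?case by simp
next
  case (Suc k)
  have "(\<lambda>y. hderiv k f y h) = (\<lambda>y. hderiv k f y h')"
    using Suc by auto
  then show ?case using Suc.prems by simp
qed

lemma Cp_diff: "Cp p f \<Longrightarrow> k < p \<Longrightarrow> (\<lambda>y. hderiv k f y h) differentiable (at x)"
  unfolding Cp_def by blast

lemma hderiv_lin:
  assumes cp: "Cp p f"
  shows "k \<le> p \<Longrightarrow> i < k \<Longrightarrow>
    hderiv k f x (h(i := a *\<^sub>R v + b *\<^sub>R w)) = a * hderiv k f x (h(i := v)) + b * hderiv k f x (h(i := w))"
proof (induction k arbitrary: x i)
  case 0 then show ?case by simp
next
  case (Suc k)
  have kp: "k < p" using Suc by simp
  show ?case
  proof (cases "i = k")
    case True
    have loc: "\<And>u y. hderiv k f y (h(k := u)) = hderiv k f y h"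
      by (rule hderiv_local) auto
    have lin: "linear (frechet_derivative (\<lambda>y. hderiv k f y h) (at x))"
      by (rule linear_frechet_derivative[OF Cp_diff[OF cp kp]])
    have loc2: "\<And>u. (\<lambda>y. hderiv k f y (h(k := u))) = (\<lambda>y. hderiv k f y h)"
      using loc by auto
    show ?thesis using True
      by (simp only: hderiv.simps fun_upd_same loc2 linear_add[OF lin] linear_scale[OF lin]) simp
  next
    case False
    then have ik: "i < k" using Suc by simp
    let ?F = "\<lambda>u y. hderiv k f y (h(i := u))"
    have eq: "?F (a *\<^sub>R v + b *\<^sub>R w) = (\<lambda>y. a * ?F v y + b * ?F w y)"
      using Suc.IH[OF _ ik] Suc.prems by (simp add: fun_eq_iff del: fun_upd_apply)
    have d1: "(?F v has_derivative frechet_derivative (?F v) (at x)) (at x)"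
      using Cp_diff[OF cp kp] frechet_derivative_works by blast
    have d2: "(?F w has_derivative frechet_derivative (?F w) (at x)) (at x)"
      using Cp_diff[OF cp kp] frechet_derivative_works by blast
    have "((\<lambda>y. a * ?F v y + b * ?F w y) has_derivative
        (\<lambda>z. a * frechet_derivative (?F v) (at x) z + b * frechet_derivative (?F w) (at x) z)) (at x)"
      by (intro has_derivative_add has_derivative_mult_right d1 d2)
    then have "frechet_derivative (\<lambda>y. a * ?F v y + b * ?F w y) (at x) =
        (\<lambda>z. a * frechet_derivative (?F v) (at x) z + b * frechet_derivative (?F w) (at x) z)"
      by (rule frechet_derivative_at[symmetric])
    then show ?thesis using False eq by (simp del: fun_upd_apply) simp
  qed
qed

lemma hderiv_linear:
  assumes cp: "Cp p f" and "k \<le> p" "i < k"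
  shows "linear (\<lambda>v. hderiv k f x (h(i := v)))"
proof (rule linearI)
  fix b1 b2 show "hderiv k f x (h(i := b1 + b2)) = hderiv k f x (h(i := b1)) + hderiv k f x (h(i := b2))"
    using hderiv_lin[OF cp assms(2,3), of x h 1 b1 1 b2] by simp
next
  fix r b show "hderiv k f x (h(i := r *\<^sub>R b)) = r *\<^sub>R hderiv k f x (h(i := b))"
    using hderiv_lin[OF cp assms(2,3), of x h r b 0 0] by simp
qed

lemma linear_real_bound:
  fixes l :: "'a::euclidean_space \<Rightarrow> real"
  assumes "linear l" "norm v \<le> 1"
  shows "\<bar>l v\<bar> \<le> (\<Sum>b\<in>Basis. \<bar>l b\<bar>)"
proof -
  have "l v = l (\<Sum>b\<in>Basis. (v \<bullet> b) *\<^sub>R b)" by (simp add: euclidean_representation)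
  also have "\<dots> = (\<Sum>b\<in>Basis. (v \<bullet> b) * l b)"
    using assms(1) by (simp add: linear_sum linear_scale)
  finally have "\<bar>l v\<bar> \<le> (\<Sum>b\<in>Basis. \<bar>(v \<bullet> b) * l b\<bar>)"
    by (simp add: sum_abs)
  also have "\<dots> \<le> (\<Sum>b\<in>Basis. \<bar>l b\<bar>)"
  proof (rule sum_mono)
    fix b :: 'a assume b: "b \<in> Basis"
    have "\<bar>v \<bullet> b\<bar> \<le> 1" using Basis_le_norm[OF b, of v] assms(2) by simp
    then show "\<bar>(v \<bullet> b) * l b\<bar> \<le> \<bar>l b\<bar>"
      by (simp add: abs_mult mult_left_le_one_le)
  qed
  finally show ?thesis .
qed

lemma hderiv_bounded:
  assumes cp: "Cp p f" and kp: "k \<le> p"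
  shows "\<exists>B. \<forall>h. (\<forall>i<k. norm (h i) \<le> 1) \<longrightarrow> \<bar>hderiv k f x h\<bar> \<le> B"
proof -
  have "n \<le> k \<Longrightarrow> \<exists>B. \<forall>h. (\<forall>i<n. norm (h i) \<le> 1) \<and> (\<forall>i. n \<le> i \<and> i < k \<longrightarrow> h i \<in> Basis)
      \<longrightarrow> \<bar>hderiv k f x h\<bar> \<le> B" for n
  proof (induction n)
    case 0
    let ?S = "PiE {..<k} (\<lambda>_. Basis :: 'a set)"
    have fin: "finite ?S" by (simp add: finite_PiE)
    show ?case
    proof (intro exI allI impI)
      fix h :: "nat \<Rightarrow> 'a"
      assume h: "(\<forall>i<0. norm (h i) \<le> 1) \<and> (\<forall>i. 0 \<le> i \<and> i < k \<longrightarrow> h i \<in> Basis)"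
      have g: "restrict h {..<k} \<in> ?S" using h by auto
      have "hderiv k f x h = hderiv k f x (restrict h {..<k})"
        by (rule hderiv_local) simp
      then show "\<bar>hderiv k f x h\<bar> \<le> (\<Sum>g\<in>?S. \<bar>hderiv k f x g\<bar>)"
        using member_le_sum[OF g, of "\<lambda>g. \<bar>hderiv k f x g\<bar>"] fin by simp
    qed
  next
    case (Suc n)
    then obtain B where B: "\<And>h. (\<forall>i<n. norm (h i) \<le> 1) \<and> (\<forall>i. n \<le> i \<and> i < k \<longrightarrow> h i \<in> Basis)
      \<Longrightarrow> \<bar>hderiv k f x h\<bar> \<le> B" by auto
    have nk: "n < k" using Suc by simp
    show ?case
    proof (intro exI allI impI)
      fix h :: "nat \<Rightarrow> 'a"
      assume h: "(\<forall>i<Suc n. norm (h i) \<le> 1) \<and> (\<forall>i. Suc n \<le> i \<and> i < k \<longrightarrow> h i \<in> Basis)"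
      have lin: "linear (\<lambda>v. hderiv k f x (h(n := v)))"
        by (rule hderiv_linear[OF cp kp nk])
      have "\<bar>hderiv k f x (h(n := h n))\<bar> \<le> (\<Sum>b\<in>Basis. \<bar>hderiv k f x (h(n := b))\<bar>)"
        using linear_real_bound[OF lin, of "h n"] h by simp
      also have "\<dots> \<le> (\<Sum>b\<in>(Basis::'a set). B)"
      proof (rule sum_mono)
        fix b :: 'a assume b: "b \<in> Basis"
        show "\<bar>hderiv k f x (h(n := b))\<bar> \<le> B"
          apply (rule B) using h b by (auto simp: less_Suc_eq Suc_le_eq)
      qed
      finally show "\<bar>hderiv k f x h\<bar> \<le> real DIM('a) * B" by simp
    qed
  qed
  from this[OF order_refl] obtain B where
    "\<forall>h. (\<forall>i<k. norm (h i) \<le> 1) \<and> (\<forall>i. k \<le> i \<and> i < k \<longrightarrow> h i \<in> Basis) \<longrightarrow> \<bar>hderiv k f x h\<bar> \<le> B" ..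
  then show ?thesis by (intro exI[of _ B]) auto
qed

lemma pnorm_ge:
  assumes cp: "Cp p f" and h: "\<forall>i<p. norm (h i) \<le> 1"
  shows "hderiv p f y h - hderiv p f x h \<le> pnorm p (\<lambda>h. hderiv p f y h - hderiv p f x h)"
proof -
  obtain B1 where B1: "\<forall>h. (\<forall>i<p. norm (h i) \<le> 1) \<longrightarrow> \<bar>hderiv p f y h\<bar> \<le> B1"
    using hderiv_bounded[OF cp order_refl] by blast
  obtain B2 where B2: "\<forall>h. (\<forall>i<p. norm (h i) \<le> 1) \<longrightarrow> \<bar>hderiv p f x h\<bar> \<le> B2"
    using hderiv_bounded[OF cp order_refl] by blast
  have bdd: "bdd_above {hderiv p f y h - hderiv p f x h | h. \<forall>i<p. norm (h i) \<le> 1}"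
  proof (rule bdd_aboveI)
    fix z assume "z \<in> {hderiv p f y h - hderiv p f x h | h. \<forall>i<p. norm (h i) \<le> 1}"
    then obtain g where "z = hderiv p f y g - hderiv p f x g" "\<forall>i<p. norm (g i) \<le> 1" by auto
    then show "z \<le> B1 + B2" using B1 B2 by fastforce
  qed
  show ?thesis unfolding pnorm_def
    by (rule cSup_upper[OF _ bdd]) (use h in auto)
qed

lemma hderiv_path_deriv:
  assumes cp: "Cp p f" and kp: "k < p" and hk: "h k = u"
  shows "((\<lambda>t. hderiv k f (y + t *\<^sub>R u) h) has_real_derivative hderiv (Suc k) f (y + t *\<^sub>R u) h) (at t)"
proof -
  let ?F = "\<lambda>z. hderiv k f z h"
  let ?D = "frechet_derivative ?F (at (y + t *\<^sub>R u))"
  have dF: "(?F has_derivative ?D) (at (y + t *\<^sub>R u))"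
    using Cp_diff[OF cp kp] frechet_derivative_works by blast
  have lin: "linear ?D" using Cp_diff[OF cp kp] by (rule linear_frechet_derivative)
  have dp: "((\<lambda>t. y + t *\<^sub>R u) has_derivative (\<lambda>s. s *\<^sub>R u)) (at t)"
    by (auto intro!: derivative_eq_intros)
  have "((?F \<circ> (\<lambda>t. y + t *\<^sub>R u)) has_derivative (?D \<circ> (\<lambda>s. s *\<^sub>R u))) (at t)"
    by (rule diff_chain_at[OF dp dF])
  moreover have "(?D \<circ> (\<lambda>s. s *\<^sub>R u)) = (*) (hderiv (Suc k) f (y + t *\<^sub>R u) h)"
    using hk by (simp add: fun_eq_iff linear_scale[OF lin] mult.commute)
  ultimately show ?thesis
    unfolding has_field_derivative_def by (simp add: comp_def)
qed

lemma taylor_pos: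
  fixes g :: "nat \<Rightarrow> real \<Rightarrow> real"
  assumes "\<And>j t. j < n \<Longrightarrow> (g j has_real_derivative g (Suc j) t) (at t)"
    and "\<And>t. t \<ge> 0 \<Longrightarrow> \<bar>g n t - g n 0\<bar> \<le> C * t"
    and "c \<ge> 0"
  shows "\<bar>g 0 c - (\<Sum>i\<le>n. g i 0 * c ^ i / fact i)\<bar> \<le> C * c ^ Suc n / fact (Suc n)"
  using assms
proof (induction n arbitrary: g c)
  case 0
  then show ?case by simp
next
  case (Suc n)
  have IH: "\<bar>g 1 t - (\<Sum>i\<le>n. g (Suc i) 0 * t ^ i / fact i)\<bar> \<le> C * t ^ Suc n / fact (Suc n)"
    if "t \<ge> 0" for t
    using Suc.IH[of "\<lambda>j. g (Suc j)" t] Suc.prems that by simp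
  define Q where "Q t = (\<Sum>i\<le>n. g (Suc i) 0 * t ^ Suc i / fact (Suc i))" for t
  define Q' where "Q' t = (\<Sum>i\<le>n. g (Suc i) 0 * t ^ i / fact i)" for t
  have dQ: "(Q has_real_derivative Q' t) (at t)" for t
    unfolding Q_def Q'_def
  proof (rule DERIV_sum)
    fix i assume "i \<in> {..n}"
    have "((\<lambda>t. g (Suc i) 0 * t ^ Suc i / fact (Suc i)) has_real_derivative
        g (Suc i) 0 * (real (Suc i) * t ^ i) / fact (Suc i)) (at t)"
      using DERIV_pow[of "Suc i" t] by (intro DERIV_cdivide DERIV_cmult) simp
    moreover have "g (Suc i) 0 * (real (Suc i) * t ^ i) / fact (Suc i) = g (Suc i) 0 * t ^ i / fact i"
      by (simp add: fact_Suc)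
    ultimately show "((\<lambda>t. g (Suc i) 0 * t ^ Suc i / fact (Suc i)) has_real_derivative
        g (Suc i) 0 * t ^ i / fact i) (at t)" by simp
  qed
  have sumeq: "(\<Sum>i\<le>Suc n. g i 0 * t ^ i / fact i) = g 0 0 + Q t" for t
    unfolding Q_def by (subst sum.atMost_Suc_shift) simp
  define psi where "psi t = g 0 t - g 0 0 - Q t" for t
  have dpsi: "(psi has_real_derivative (g 1 t - Q' t)) (at t)" for t
    unfolding psi_def using Suc.prems(1)[of 0 t] dQ[of t]
    by (auto intro!: derivative_eq_intros)
  have bnd: "\<bar>g 1 t - Q' t\<bar> \<le> C * t ^ Suc n / fact (Suc n)" if "t \<ge> 0" for t
    using IH[OF that] unfolding Q'_def .
  define W where "W t = C * t ^ Suc (Suc n) / fact (Suc (Suc n))" for t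
  have dW: "(W has_real_derivative C * t ^ Suc n / fact (Suc n)) (at t)" for t
  proof -
    have "(W has_real_derivative C * (real (Suc (Suc n)) * t ^ Suc n) / fact (Suc (Suc n))) (at t)"
      unfolding W_def using DERIV_pow[of "Suc (Suc n)" t] by (intro DERIV_cdivide DERIV_cmult) simp
    moreover have "C * (real (Suc (Suc n)) * t ^ Suc n) / fact (Suc (Suc n)) = C * t ^ Suc n / fact (Suc n)"
      by (simp add: fact_Suc[of "Suc n"] del: fact_Suc)
    ultimately show ?thesis by simp
  qed
  have U: "(\<lambda>t. W t - psi t) 0 \<le> (\<lambda>t. W t - psi t) c"
  proof (rule DERIV_nonneg_imp_nondecreasing[OF Suc.prems(3)])
    fix x assume "0 \<le> x" "x \<le> c"
    have "((\<lambda>t. W t - psi t) has_real_derivative (C * x ^ Suc n / fact (Suc n) - (g 1 x - Q' x))) (at x)"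
      by (rule DERIV_diff[OF dW dpsi])
    moreover have "0 \<le> C * x ^ Suc n / fact (Suc n) - (g 1 x - Q' x)"
      using bnd[of x] \<open>0 \<le> x\<close> by linarith
    ultimately show "\<exists>y. ((\<lambda>t. W t - psi t) has_real_derivative y) (at x) \<and> 0 \<le> y" by blast
  qed
  have V: "(\<lambda>t. W t + psi t) 0 \<le> (\<lambda>t. W t + psi t) c"
  proof (rule DERIV_nonneg_imp_nondecreasing[OF Suc.prems(3)])
    fix x assume "0 \<le> x" "x \<le> c"
    have "((\<lambda>t. W t + psi t) has_real_derivative (C * x ^ Suc n / fact (Suc n) + (g 1 x - Q' x))) (at x)"
      by (rule DERIV_add[OF dW dpsi])
    moreover have "0 \<le> C * x ^ Suc n / fact (Suc n) + (g 1 x - Q' x)"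
      using bnd[of x] \<open>0 \<le> x\<close> by linarith
    ultimately show "\<exists>y. ((\<lambda>t. W t + psi t) has_real_derivative y) (at x) \<and> 0 \<le> y" by blast
  qed
  have "W 0 = 0" "psi 0 = 0" unfolding W_def psi_def Q_def by simp_all
  then have "\<bar>psi c\<bar> \<le> W c" using U V by simp
  then show ?case unfolding psi_def W_def sumeq by simp
qed

lemma taylor_abs:
  fixes g :: "nat \<Rightarrow> real \<Rightarrow> real"
  assumes d: "\<And>j t. j < n \<Longrightarrow> (g j has_real_derivative g (Suc j) t) (at t)"
    and b: "\<And>t. \<bar>g n t - g n 0\<bar> \<le> C * \<bar>t\<bar>"
  shows "\<bar>g 0 c - (\<Sum>i\<le>n. g i 0 * c ^ i / fact i)\<bar> \<le> C * \<bar>c\<bar> ^ Suc n / fact (Suc n)"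
proof (cases "c \<ge> 0")
  case True
  have bb: "\<And>t. t \<ge> 0 \<Longrightarrow> \<bar>g n t - g n 0\<bar> \<le> C * t" using b by (metis abs_of_nonneg)
  show ?thesis using taylor_pos[OF d bb True] True by simp
next
  case False
  define g' where "g' j t = (-1) ^ j * g j (- t)" for j t
  have d': "(g' j has_real_derivative g' (Suc j) t) (at t)" if "j < n" for j t
  proof -
    have "((\<lambda>t. g j (- t)) has_real_derivative g (Suc j) (- t) * (- 1)) (at t)"
      using DERIV_chain2[OF d[OF that] DERIV_minus[OF DERIV_ident]] by simp
    then show ?thesis unfolding g'_def
      by (auto intro!: derivative_eq_intros)
  qed
  have b': "\<bar>g' n t - g' n 0\<bar> \<le> C * t" if "t \<ge> 0" for t
  proof -
    have "\<bar>g' n t - g' n 0\<bar> = \<bar>g n (- t) - g n 0\<bar>"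
      unfolding g'_def by (simp add: right_diff_distrib[symmetric] abs_mult)
    then show ?thesis using b[of "- t"] that by simp
  qed
  have "\<bar>g' 0 (- c) - (\<Sum>i\<le>n. g' i 0 * (- c) ^ i / fact i)\<bar> \<le> C * (- c) ^ Suc n / fact (Suc n)"
    using taylor_pos[of n g' C "- c"] d' b' False by simp
  moreover have "(\<Sum>i\<le>n. g' i 0 * (- c) ^ i / fact i) = (\<Sum>i\<le>n. g i 0 * c ^ i / fact i)"
  proof (rule sum.cong)
    fix i
    have "(-1::real) ^ i * (- c) ^ i = c ^ i" by (simp flip: power_mult_distrib)
    then show "g' i 0 * (- c) ^ i / fact i = g i 0 * c ^ i / fact i"
    proof -
      have "g' i 0 * (- c) ^ i = g i 0 * ((-1::real) ^ i * (- c) ^ i)"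
        unfolding g'_def by (simp only: mult_ac minus_zero)
      then show ?thesis using \<open>(-1::real) ^ i * (- c) ^ i = c ^ i\<close> by simp
    qed
  qed simp
  moreover have "\<bar>c\<bar> = - c" using False by simp
  ultimately show ?thesis by (simp add: g'_def)
qed

lemma grad_taylor:
  fixes f :: "'a::euclidean_space \<Rightarrow> real"
  assumes cp: "Cp p f" and p2: "p \<ge> 2"
    and grad: "\<And>x. (f has_derivative (\<lambda>h. gradf x \<bullet> h)) (at x)"
    and Lip: "\<And>x y. pnorm p (\<lambda>h. hderiv p f y h - hderiv p f x h) \<le> Lp * norm (y - x)"
    and u: "norm u = 1" and w: "norm w \<le> 1"
  shows "\<bar>gradf (y + c *\<^sub>R u) \<bullet> w - (\<Sum>i\<le>p-1. hderiv (Suc i) f y (\<lambda>i. if i = 0 then w else u) * c ^ i / fact i)\<bar>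
     \<le> Lp * \<bar>c\<bar> ^ p / fact p"
proof -
  define hw where "hw = (\<lambda>i::nat. if i = 0 then w else u)"
  define g where "g j t = hderiv (Suc j) f (y + t *\<^sub>R u) hw" for j t
  have hw1: "\<forall>i<p. norm (hw i) \<le> 1" using u w by (simp add: hw_def)
  have d: "(g j has_real_derivative g (Suc j) t) (at t)" if "j < p - 1" for j t
    unfolding g_def by (rule hderiv_path_deriv[OF cp]) (use that in \<open>auto simp: hw_def\<close>)
  have b: "\<bar>g (p-1) t - g (p-1) 0\<bar> \<le> Lp * \<bar>t\<bar>" for t
  proof -
    have sp: "Suc (p - 1) = p" using p2 by simp
    have n: "norm (y + t *\<^sub>R u - y) = \<bar>t\<bar>" using u by simp
    have "hderiv p f (y + t *\<^sub>R u) hw - hderiv p f y hw \<le> Lp * \<bar>t\<bar>"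
      using pnorm_ge[OF cp hw1, of "y + t *\<^sub>R u" y] Lip[of "y + t *\<^sub>R u" y] n u by simp
    moreover have "hderiv p f y hw - hderiv p f (y + t *\<^sub>R u) hw \<le> Lp * \<bar>t\<bar>"
      using pnorm_ge[OF cp hw1, of y "y + t *\<^sub>R u"] Lip[of y "y + t *\<^sub>R u"] n u
      by (simp add: norm_minus_commute)
    ultimately show ?thesis unfolding g_def sp by simp
  qed
  have g0: "g 0 t = gradf (y + t *\<^sub>R u) \<bullet> w" for t
  proof -
    have "(\<lambda>h. gradf (y + t *\<^sub>R u) \<bullet> h) = frechet_derivative f (at (y + t *\<^sub>R u))"
      by (rule frechet_derivative_at[OF grad])
    then show ?thesis unfolding g_def hw_def by (simp add: fun_eq_iff)
  qed
  have "\<bar>g 0 c - (\<Sum>i\<le>p-1. g i 0 * c ^ i / fact i)\<bar> \<le> Lp * \<bar>c\<bar> ^ Suc (p-1) / fact (Suc (p-1))"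
    by (rule taylor_abs[OF d b])
  moreover have "Suc (p - 1) = p" using p2 by simp
  ultimately show ?thesis unfolding g0 by (simp add: g_def hw_def)
qed



lemma norm_add_sq: "(norm (a + v))\<^sup>2 = (norm a)\<^sup>2 + 2 * (a \<bullet> v) + (norm (v::'a::real_inner))\<^sup>2"
  by (simp add: power2_norm_eq_inner inner_add_left inner_add_right inner_commute)

lemma noise:
  fixes G :: "'a::euclidean_space \<Rightarrow> 'c \<Rightarrow> 'a"
  assumes P: "prob_space M" and fin: "finite S"
    and iG: "\<And>x. integrable M (G x)" and eG: "\<And>x. (\<integral>\<xi>. G x \<xi> \<partial>M) = gradf x"
    and iV: "\<And>x. integrable M (\<lambda>\<xi>. (norm (G x \<xi> - gradf x))\<^sup>2)"
    and eV: "\<And>x. (\<integral>\<xi>. (norm (G x \<xi> - gradf x))\<^sup>2 \<partial>M) \<le> \<sigma>\<^sup>2"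
  shows "integrable M (\<lambda>\<xi>. (norm (a + (\<Sum>t\<in>S. \<theta> t *\<^sub>R (G (z t) \<xi> - gradf (z t)))))\<^sup>2)
    \<and> (\<integral>\<xi>. (norm (a + (\<Sum>t\<in>S. \<theta> t *\<^sub>R (G (z t) \<xi> - gradf (z t)))))\<^sup>2 \<partial>M)
       \<le> (norm a)\<^sup>2 + real (card S) * \<sigma>\<^sup>2 * (\<Sum>t\<in>S. (\<theta> t)\<^sup>2)"
proof -
  define n where "n t \<xi> = G (z t) \<xi> - gradf (z t)" for t \<xi>
  define N where "N \<xi> = (\<Sum>t\<in>S. \<theta> t *\<^sub>R n t \<xi>)" for \<xi>
  have FM: "finite_measure M" using P by (simp add: prob_space_def)
  have one: "measure M (space M) = 1" using P by (simp add: prob_space.prob_space)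
  have int_n: "integrable M (n t)" for t
    unfolding n_def by (rule Bochner_Integration.integrable_diff[OF iG finite_measure.integrable_const[OF FM]])
  have e_n: "(\<integral>\<xi>. n t \<xi> \<partial>M) = 0" for t
    unfolding n_def
    by (subst Bochner_Integration.integral_diff[OF iG finite_measure.integrable_const[OF FM]]) (simp add: eG one)
  have [measurable]: "n t \<in> borel_measurable M" for t using int_n by (rule borel_measurable_integrable)
  have mN: "(\<lambda>\<xi>. (norm (N \<xi>))\<^sup>2) \<in> borel_measurable M"
    unfolding N_def by measurable
  define B where "B \<xi> = real (card S) * (\<Sum>t\<in>S. (\<theta> t)\<^sup>2 * (norm (n t \<xi>))\<^sup>2)" for \<xi>
  have int_B: "integrable M B"
    unfolding B_def n_def using iV by (intro Bochner_Integration.integrable_mult_right Bochner_Integration.integrable_sum) auto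
  have pw: "(norm (N \<xi>))\<^sup>2 \<le> B \<xi>" for \<xi>
  proof -
    have "norm (N \<xi>) \<le> (\<Sum>t\<in>S. \<bar>\<theta> t\<bar> * norm (n t \<xi>))"
      unfolding N_def using norm_sum[of "\<lambda>t. \<theta> t *\<^sub>R n t \<xi>" S] by simp
    then have "(norm (N \<xi>))\<^sup>2 \<le> (\<Sum>t\<in>S. \<bar>\<theta> t\<bar> * norm (n t \<xi>))\<^sup>2"
      by (intro power_mono) auto
    also have "\<dots> \<le> (\<Sum>t\<in>S. (\<bar>\<theta> t\<bar> * norm (n t \<xi>))\<^sup>2) * real (card S)"
      by (rule sum_squared_le_sum_of_squares)
    finally show ?thesis unfolding B_def by (simp add: power_mult_distrib mult.commute)
  qed
  have int_N: "integrable M (\<lambda>\<xi>. (norm (N \<xi>))\<^sup>2)"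
    by (rule Bochner_Integration.integrable_bound[OF int_B mN]) (use pw in \<open>auto intro!: AE_I2 order_trans[OF _ abs_ge_self]\<close>)
  have int_in: "integrable M (\<lambda>\<xi>. a \<bullet> n t \<xi>)" for t
    using int_n by (rule Bochner_Integration.integrable_inner_right)
  have e_in: "(\<integral>\<xi>. a \<bullet> n t \<xi> \<partial>M) = 0" for t
    using int_n[of t] by (simp add: Bochner_Integration.integral_inner_right e_n)
  have expand: "(norm (a + N \<xi>))\<^sup>2 = (norm a)\<^sup>2 + 2 * (\<Sum>t\<in>S. \<theta> t * (a \<bullet> n t \<xi>)) + (norm (N \<xi>))\<^sup>2" for \<xi>
    unfolding norm_add_sq N_def by (simp add: inner_sum_right)
  have int_cross: "integrable M (\<lambda>\<xi>. 2 * (\<Sum>t\<in>S. \<theta> t * (a \<bullet> n t \<xi>)))"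
    using int_in by (intro Bochner_Integration.integrable_mult_right Bochner_Integration.integrable_sum) auto
  have int_all: "integrable M (\<lambda>\<xi>. (norm a)\<^sup>2 + 2 * (\<Sum>t\<in>S. \<theta> t * (a \<bullet> n t \<xi>)) + (norm (N \<xi>))\<^sup>2)"
    using int_cross int_N finite_measure.integrable_const[OF FM] by (intro Bochner_Integration.integrable_add) auto
  have cross0: "(\<integral>\<xi>. 2 * (\<Sum>t\<in>S. \<theta> t * (a \<bullet> n t \<xi>)) \<partial>M) = 0"
    using int_in e_in by (simp add: Bochner_Integration.integral_sum)
  have "(\<integral>\<xi>. (norm a)\<^sup>2 + 2 * (\<Sum>t\<in>S. \<theta> t * (a \<bullet> n t \<xi>)) + (norm (N \<xi>))\<^sup>2 \<partial>M)
      = (norm a)\<^sup>2 + (\<integral>\<xi>. (norm (N \<xi>))\<^sup>2 \<partial>M)"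
  proof -
    have c: "integrable M (\<lambda>\<xi>. (norm a)\<^sup>2)" by (rule finite_measure.integrable_const[OF FM])
    have i1: "integrable M (\<lambda>\<xi>. (norm a)\<^sup>2 + 2 * (\<Sum>t\<in>S. \<theta> t * (a \<bullet> n t \<xi>)))"
      by (rule Bochner_Integration.integrable_add[OF c int_cross])
    show ?thesis
      apply (subst Bochner_Integration.integral_add[OF i1 int_N])
      apply (subst Bochner_Integration.integral_add[OF c int_cross])
      using cross0 by (simp add: one)
  qed
  also have "(\<integral>\<xi>. (norm (N \<xi>))\<^sup>2 \<partial>M) \<le> (\<integral>\<xi>. B \<xi> \<partial>M)"
    by (rule Bochner_Integration.integral_mono[OF int_N int_B pw])
  also have "(\<integral>\<xi>. B \<xi> \<partial>M) = real (card S) * (\<Sum>t\<in>S. (\<theta> t)\<^sup>2 * (\<integral>\<xi>. (norm (n t \<xi>))\<^sup>2 \<partial>M))"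
    unfolding B_def n_def using iV by (simp add: Bochner_Integration.integral_sum)
  also have "\<dots> \<le> real (card S) * (\<Sum>t\<in>S. (\<theta> t)\<^sup>2 * \<sigma>\<^sup>2)"
    unfolding n_def using eV by (intro mult_left_mono sum_mono mult_left_mono) auto
  finally have le: "(\<integral>\<xi>. (norm a)\<^sup>2 + 2 * (\<Sum>t\<in>S. \<theta> t * (a \<bullet> n t \<xi>)) + (norm (N \<xi>))\<^sup>2 \<partial>M)
      \<le> (norm a)\<^sup>2 + real (card S) * \<sigma>\<^sup>2 * (\<Sum>t\<in>S. (\<theta> t)\<^sup>2)"
    by (simp add: sum_distrib_left mult.commute mult.left_commute)
  have fe: "(\<lambda>\<xi>. (norm (a + N \<xi>))\<^sup>2) = (\<lambda>\<xi>. (norm a)\<^sup>2 + 2 * (\<Sum>t\<in>S. \<theta> t * (a \<bullet> n t \<xi>)) + (norm (N \<xi>))\<^sup>2)"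
    using expand by (rule ext)
  have "integrable M (\<lambda>\<xi>. (norm (a + N \<xi>))\<^sup>2) \<and> (\<integral>\<xi>. (norm (a + N \<xi>))\<^sup>2 \<partial>M) \<le> (norm a)\<^sup>2 + real (card S) * \<sigma>\<^sup>2 * (\<Sum>t\<in>S. (\<theta> t)\<^sup>2)"
    unfolding fe using int_all le by blast
  then show ?thesis unfolding N_def n_def .
qed



lemma moment_zero:
  fixes \<theta> \<gamma> :: "nat \<Rightarrow> real" and S :: "nat set"
  assumes fin: "finite S" and gpos: "\<And>t. t \<in> S \<Longrightarrow> \<gamma> t \<noteq> 0"
    and mom: "\<And>j. 1 \<le> j \<Longrightarrow> j \<le> i \<Longrightarrow> (\<Sum>t\<in>S. \<theta> t / \<gamma> t ^ j) = 1" and i: "1 \<le> i"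
  shows "(1 - sum \<theta> S) * (-1) ^ i + (\<Sum>t\<in>S. \<theta> t * ((1 - \<gamma> t) / \<gamma> t) ^ i) = 0"
proof -
  have "(\<Sum>t\<in>S. \<theta> t * ((1 - \<gamma> t) / \<gamma> t) ^ i)
      = (\<Sum>t\<in>S. \<Sum>j\<le>i. \<theta> t * (of_nat (i choose j) * (1 / \<gamma> t) ^ j * (-1) ^ (i - j)))"
  proof (rule sum.cong)
    fix t assume t: "t \<in> S"
    have "(1 - \<gamma> t) / \<gamma> t = 1 / \<gamma> t + (-1)" using gpos[OF t] by (simp add: field_simps)
    then show "\<theta> t * ((1 - \<gamma> t) / \<gamma> t) ^ i = (\<Sum>j\<le>i. \<theta> t * (of_nat (i choose j) * (1 / \<gamma> t) ^ j * (-1) ^ (i - j)))"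
      by (simp only: binomial_ring sum_distrib_left)
  qed simp
  also have "\<dots> = (\<Sum>j\<le>i. of_nat (i choose j) * (-1) ^ (i - j) * (\<Sum>t\<in>S. \<theta> t / \<gamma> t ^ j))"
    by (subst sum.swap) (simp add: sum_distrib_left mult_ac power_one_over)
  also have "\<dots> = (\<Sum>j\<le>i. of_nat (i choose j) * (-1) ^ (i - j) * (1 + (if j = 0 then sum \<theta> S - 1 else 0)))"
    using mom by (intro sum.cong) auto
  also have "\<dots> = (\<Sum>j\<le>i. of_nat (i choose j) * (-1) ^ (i - j)) +
        (\<Sum>j\<le>i. of_nat (i choose j) * (-1) ^ (i - j) * (if j = 0 then sum \<theta> S - 1 else 0))"
    by (simp only: distrib_left mult_1_right sum.distrib)
  also have "(\<Sum>j\<le>i. of_nat (i choose j) * (-1::real) ^ (i - j)) = 0"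
  proof -
    have "(1 + (-1::real)) ^ i = (\<Sum>j\<le>i. of_nat (i choose j) * 1 ^ j * (-1) ^ (i - j))"
      by (rule binomial_ring)
    moreover have "(0::real) ^ i = 0" using i by simp
    ultimately show ?thesis by simp
  qed
  also have "(\<Sum>j\<le>i. of_nat (i choose j) * (-1::real) ^ (i - j) * (if j = 0 then sum \<theta> S - 1 else 0))
      = (-1) ^ i * (sum \<theta> S - 1)"
  proof -
    have "(\<lambda>j. of_nat (i choose j) * (-1::real) ^ (i - j) * (if j = 0 then sum \<theta> S - 1 else 0))
        = (\<lambda>j. if j = 0 then (-1) ^ i * (sum \<theta> S - 1) else 0)" by auto
    then show ?thesis by (simp only: sum.delta finite_atMost) simp
  qed
  finally show ?thesis by (simp add: algebra_simps)
qed



lemma remainder_bound: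
  fixes f :: "'a::euclidean_space \<Rightarrow> real"
  assumes cp: "Cp p f" and p2: "p \<ge> 2"
    and grad: "\<And>x. (f has_derivative (\<lambda>h. gradf x \<bullet> h)) (at x)"
    and Lip: "\<And>x y. pnorm p (\<lambda>h. hderiv p f y h - hderiv p f x h) \<le> Lp * norm (y - x)"
    and u: "norm u = 1" and eta: "\<eta> > 0"
    and gam: "\<And>t. t \<in> {1..p-1} \<Longrightarrow> 0 < \<gamma> t \<and> \<gamma> t < 1"
    and mom: "\<And>i. i \<in> {1..p-1} \<Longrightarrow> (\<Sum>t\<in>{1..p-1}. \<theta> t / \<gamma> t ^ i) = 1"
    and Th: "sum \<theta> {1..p-1} \<le> 1"
  shows "norm ((1 - sum \<theta> {1..p-1}) *\<^sub>R (gradf (y + (- \<eta>) *\<^sub>R u) - gradf y)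
      + (\<Sum>t\<in>{1..p-1}. \<theta> t *\<^sub>R (gradf (y + ((1 - \<gamma> t) / \<gamma> t * \<eta>) *\<^sub>R u) - gradf y)))
     \<le> Lp * \<eta> ^ p / fact p * ((1 - sum \<theta> {1..p-1}) + (\<Sum>t\<in>{1..p-1}. \<bar>\<theta> t\<bar> * ((1 - \<gamma> t) / \<gamma> t) ^ p))"
    (is "norm ?R \<le> ?B")
proof -
  define S where "S = {1..p-1}"
  define \<Theta> where "\<Theta> = sum \<theta> S"
  define c where "c t = (1 - \<gamma> t) / \<gamma> t" for t
  have cpos: "c t \<ge> 0" if "t \<in> S" for t using gam[of t] that by (simp add: c_def S_def)
  have claim: "?R \<bullet> w \<le> ?B" if w: "norm w \<le> 1" for w
  proof -
    define hw where "hw = (\<lambda>i::nat. if i = 0 then w else u)"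
    define A where "A i = hderiv (Suc i) f y hw" for i
    define P where "P x = (\<Sum>i\<le>p-1. A i * x ^ i / fact i)" for x
    define T where "T x = gradf (y + x *\<^sub>R u) \<bullet> w" for x
    define E where "E x = T x - P x" for x
    have Eb: "\<bar>E x\<bar> \<le> Lp * \<bar>x\<bar> ^ p / fact p" for x
      unfolding E_def T_def P_def A_def hw_def by (rule grad_taylor[OF cp p2 grad Lip u w])
    have E0: "E 0 = 0"
    proof -
      have h: "(0::real) ^ p = 0" using p2 by simp
      have "\<bar>E 0\<bar> \<le> Lp * \<bar>0\<bar> ^ p / fact p" by (rule Eb)
      then show ?thesis unfolding abs_zero h by simp
    qed
    have Psplit: "P x = A 0 + (\<Sum>i\<in>S. A i * x ^ i / fact i)" for x
      unfolding P_def S_def using p2 by (subst atMost_atLeast0, subst sum.atLeast_Suc_atMost) auto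
    have poly: "(1 - \<Theta>) * (P (- \<eta>) - P 0) + (\<Sum>t\<in>S. \<theta> t * (P (c t * \<eta>) - P 0)) = 0"
    proof -
      define Q where "Q x = (\<Sum>i\<in>S. A i * x ^ i / fact i)" for x
      have Q0: "Q 0 = 0" unfolding Q_def by (rule sum.neutral) (auto simp: S_def)
      have PQ: "P x - P 0 = Q x" for x unfolding Psplit Q_def[symmetric] Q0 by simp
      have "(1 - \<Theta>) * (P (- \<eta>) - P 0) + (\<Sum>t\<in>S. \<theta> t * (P (c t * \<eta>) - P 0))
          = (\<Sum>i\<in>S. (1 - \<Theta>) * (A i * (- \<eta>) ^ i / fact i)) + (\<Sum>i\<in>S. \<Sum>t\<in>S. \<theta> t * (A i * (c t * \<eta>) ^ i / fact i))"
      proof -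
        have s1: "(\<Sum>t\<in>S. \<theta> t * Q (c t * \<eta>)) = (\<Sum>i\<in>S. \<Sum>t\<in>S. \<theta> t * (A i * (c t * \<eta>) ^ i / fact i))"
          unfolding Q_def sum_distrib_left by (rule sum.swap)
        have s2: "(1 - \<Theta>) * Q (- \<eta>) = (\<Sum>i\<in>S. (1 - \<Theta>) * (A i * (- \<eta>) ^ i / fact i))"
          unfolding Q_def by (rule sum_distrib_left)
        show ?thesis unfolding PQ s1 s2 by (rule refl)
      qed
      also have "\<dots> = (\<Sum>i\<in>S. (1 - \<Theta>) * (A i * (- \<eta>) ^ i / fact i) + (\<Sum>t\<in>S. \<theta> t * (A i * (c t * \<eta>) ^ i / fact i)))"
        by (simp only: sum.distrib)
      also have "\<dots> = (\<Sum>i\<in>S. A i * \<eta> ^ i / fact i * ((1 - \<Theta>) * (-1) ^ i + (\<Sum>t\<in>S. \<theta> t * c t ^ i)))"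
      proof (rule sum.cong[OF refl])
        fix i
        have e1: "(- \<eta>) ^ i = (-1) ^ i * \<eta> ^ i" by (simp flip: power_mult_distrib)
        have e2: "\<theta> t * (A i * (c t * \<eta>) ^ i / fact i) = A i * \<eta> ^ i / fact i * (\<theta> t * c t ^ i)" for t
          by (simp add: power_mult_distrib)
        show "(1 - \<Theta>) * (A i * (- \<eta>) ^ i / fact i) + (\<Sum>t\<in>S. \<theta> t * (A i * (c t * \<eta>) ^ i / fact i))
            = A i * \<eta> ^ i / fact i * ((1 - \<Theta>) * (-1) ^ i + (\<Sum>t\<in>S. \<theta> t * c t ^ i))"
          unfolding e1 e2 sum_distrib_left[symmetric] by (simp add: distrib_left)
      qed
      also have "\<dots> = 0"
      proof (rule sum.neutral, rule ballI)
        fix i assume i: "i \<in> S"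
        have "(1 - \<Theta>) * (-1) ^ i + (\<Sum>t\<in>S. \<theta> t * c t ^ i) = 0"
          unfolding \<Theta>_def c_def
        proof (rule moment_zero)
          show "finite S" by (simp add: S_def)
          show "\<gamma> t \<noteq> 0" if "t \<in> S" for t using gam[of t] that by (simp add: S_def)
          show "(\<Sum>t\<in>S. \<theta> t / \<gamma> t ^ j) = 1" if "1 \<le> j" "j \<le> i" for j
            using mom[of j] that i by (simp add: S_def)
          show "1 \<le> i" using i by (simp add: S_def)
        qed
        then show "A i * \<eta> ^ i / fact i * ((1 - \<Theta>) * (-1) ^ i + (\<Sum>t\<in>S. \<theta> t * c t ^ i)) = 0" by simp
      qed
      finally show ?thesis .
    qed
    have "?R \<bullet> w = (1 - \<Theta>) * (T (- \<eta>) - T 0) + (\<Sum>t\<in>S. \<theta> t * (T (c t * \<eta>) - T 0))"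
      unfolding T_def \<Theta>_def S_def c_def
      by (simp add: inner_add_left inner_diff_left inner_sum_left)
    also have "\<dots> = ((1 - \<Theta>) * (P (- \<eta>) - P 0) + (\<Sum>t\<in>S. \<theta> t * (P (c t * \<eta>) - P 0)))
        + ((1 - \<Theta>) * E (- \<eta>) + (\<Sum>t\<in>S. \<theta> t * E (c t * \<eta>)))"
      unfolding E_def using E0 unfolding E_def
      by (simp add: algebra_simps sum.distrib sum_subtractf)
    also have "\<dots> = (1 - \<Theta>) * E (- \<eta>) + (\<Sum>t\<in>S. \<theta> t * E (c t * \<eta>))"
      using poly by simp
    also have "\<dots> \<le> (1 - \<Theta>) * (Lp * \<eta> ^ p / fact p) + (\<Sum>t\<in>S. \<bar>\<theta> t\<bar> * (Lp * (c t * \<eta>) ^ p / fact p))"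
    proof (rule add_mono)
      have "1 - \<Theta> \<ge> 0" using Th by (simp add: \<Theta>_def S_def)
      then show "(1 - \<Theta>) * E (- \<eta>) \<le> (1 - \<Theta>) * (Lp * \<eta> ^ p / fact p)"
        using Eb[of "- \<eta>"] eta by (intro mult_left_mono) auto
      show "(\<Sum>t\<in>S. \<theta> t * E (c t * \<eta>)) \<le> (\<Sum>t\<in>S. \<bar>\<theta> t\<bar> * (Lp * (c t * \<eta>) ^ p / fact p))"
      proof (rule sum_mono)
        fix t assume t: "t \<in> S"
        have "\<theta> t * E (c t * \<eta>) \<le> \<bar>\<theta> t\<bar> * \<bar>E (c t * \<eta>)\<bar>" by (simp add: abs_mult[symmetric])
        also have "\<dots> \<le> \<bar>\<theta> t\<bar> * (Lp * (c t * \<eta>) ^ p / fact p)"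
          using Eb[of "c t * \<eta>"] cpos[OF t] eta by (intro mult_left_mono) auto
        finally show "\<theta> t * E (c t * \<eta>) \<le> \<bar>\<theta> t\<bar> * (Lp * (c t * \<eta>) ^ p / fact p)" .
      qed
    qed
    also have "\<dots> = Lp * \<eta> ^ p / fact p * ((1 - \<Theta>) + (\<Sum>t\<in>S. \<bar>\<theta> t\<bar> * c t ^ p))"
    proof -
      have "(\<Sum>t\<in>S. \<bar>\<theta> t\<bar> * (Lp * (c t * \<eta>) ^ p / fact p)) = Lp * \<eta> ^ p / fact p * (\<Sum>t\<in>S. \<bar>\<theta> t\<bar> * c t ^ p)"
        by (simp add: sum_distrib_left power_mult_distrib mult_ac)
      then show ?thesis by (simp add: algebra_simps add_divide_distrib[symmetric])
    qed
    also have "\<dots> = ?B"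
      unfolding \<Theta>_def S_def c_def ..
    finally show ?thesis .
  qed
  show ?thesis
  proof (cases "?R = 0")
    case True
    then show ?thesis using claim[of 0] by simp
  next
    case False
    have e: "?R \<bullet> (?R /\<^sub>R norm ?R) = norm ?R"
      using False by (simp add: power2_norm_eq_inner[symmetric] power2_eq_square)
    have n: "norm (?R /\<^sub>R norm ?R) \<le> 1" using False by simp
    show ?thesis using claim[OF n] unfolding e .
  qed
qed


lemma path_deriv_f:
  assumes grad: "\<And>x. (f has_derivative (\<lambda>h. gradf x \<bullet> h)) (at x)"
  shows "((\<lambda>t. f (x + t *\<^sub>R d)) has_real_derivative (gradf (x + t *\<^sub>R d) \<bullet> d)) (at t)"
proof -
  have dp: "((\<lambda>t. x + t *\<^sub>R d) has_derivative (\<lambda>s. s *\<^sub>R d)) (at t)"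
    by (auto intro!: derivative_eq_intros)
  have "((f \<circ> (\<lambda>t. x + t *\<^sub>R d)) has_derivative ((\<lambda>h. gradf (x + t *\<^sub>R d) \<bullet> h) \<circ> (\<lambda>s. s *\<^sub>R d))) (at t)"
    by (rule diff_chain_at[OF dp grad])
  moreover have "((\<lambda>h. gradf (x + t *\<^sub>R d) \<bullet> h) \<circ> (\<lambda>s. s *\<^sub>R d)) = (*) (gradf (x + t *\<^sub>R d) \<bullet> d)"
    by (simp add: fun_eq_iff mult.commute)
  ultimately show ?thesis
    unfolding has_field_derivative_def by (simp add: comp_def)
qed

lemma descent:
  fixes f :: "'a::euclidean_space \<Rightarrow> real"
  assumes grad: "\<And>x. (f has_derivative (\<lambda>h. gradf x \<bullet> h)) (at x)"
    and L: "\<And>x y. norm (gradf y - gradf x) \<le> L1 * norm (y - x)"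
  shows "f (x + d) \<le> f x + gradf x \<bullet> d + L1 / 2 * (norm d)\<^sup>2"
proof -
  define phi where "phi t = f (x + t *\<^sub>R d) - t * (gradf x \<bullet> d) - L1 / 2 * t\<^sup>2 * (norm d)\<^sup>2" for t
  have "phi 1 \<le> phi 0"
  proof (rule DERIV_nonpos_imp_nonincreasing[of 0 1])
    fix t :: real assume t: "0 \<le> t" "t \<le> 1"
    have D: "(phi has_real_derivative (gradf (x + t *\<^sub>R d) \<bullet> d - gradf x \<bullet> d - L1 / 2 * (2 * t) * (norm d)\<^sup>2)) (at t)"
      unfolding phi_def using path_deriv_f[OF grad, of x d t]
      by (auto intro!: derivative_eq_intros)
    have "gradf (x + t *\<^sub>R d) \<bullet> d - gradf x \<bullet> d = (gradf (x + t *\<^sub>R d) - gradf x) \<bullet> d"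
      by (simp add: inner_diff_left)
    also have "\<dots> \<le> norm (gradf (x + t *\<^sub>R d) - gradf x) * norm d" by (rule norm_cauchy_schwarz)
    also have "\<dots> \<le> L1 * norm (t *\<^sub>R d) * norm d"
      using L[of "x + t *\<^sub>R d" x] by (intro mult_right_mono) auto
    also have "\<dots> = L1 * t * (norm d)\<^sup>2" using t by (simp add: power2_eq_square)
    finally show "\<exists>y. (phi has_real_derivative y) (at t) \<and> y \<le> 0"
      using D by (intro exI[of _ "gradf (x + t *\<^sub>R d) \<bullet> d - gradf x \<bullet> d - L1 / 2 * (2 * t) * (norm d)\<^sup>2"]) auto
  qed simp
  then show ?thesis unfolding phi_def by simp
qed

lemma direction:
  fixes g m :: "'a::real_inner"
  assumes "m \<noteq> 0"
  shows "- (g \<bullet> m) / norm m \<le> - norm g + 2 * norm (m - g)"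
proof -
  define e where "e = m - g"
  have "g \<bullet> m = (norm m)\<^sup>2 - e \<bullet> m"
    by (simp add: e_def inner_diff_left power2_norm_eq_inner)
  moreover have "e \<bullet> m \<le> norm e * norm m" by (rule norm_cauchy_schwarz)
  ultimately have "g \<bullet> m \<ge> norm m * (norm m - norm e)" by (simp add: power2_eq_square algebra_simps)
  moreover have "norm m > 0" using assms by simp
  ultimately have "(g \<bullet> m) / norm m \<ge> norm m - norm e"
    by (simp add: field_simps)
  moreover have "norm g \<le> norm m + norm e"
    using norm_triangle_ineq4[of m e] by (simp add: e_def)
  ultimately show ?thesis unfolding e_def by linarith
qed

lemma alg_agree:
  "(\<And>i. i < j \<Longrightarrow> s i = s' i) \<Longrightarrow> alg_state G x0 \<eta> q gam th s j = alg_state G x0 \<eta> q gam th s' j"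
  by (induction j) (auto split: prod.splits simp: Let_def)


lemma sq_convex:
  fixes A B \<Theta> :: real
  assumes "0 < \<Theta>" "\<Theta> < 1" "0 \<le> A"
  shows "((1 - \<Theta>) * A + B)\<^sup>2 \<le> (1 - \<Theta>) * A\<^sup>2 + B\<^sup>2 / \<Theta>"
proof -
  have "\<Theta> * ((1 - \<Theta>) * A + B)\<^sup>2 \<le> \<Theta> * ((1 - \<Theta>) * A\<^sup>2) + B\<^sup>2"
  proof -
    have "\<Theta> * ((1 - \<Theta>) * A\<^sup>2) + B\<^sup>2 - \<Theta> * ((1 - \<Theta>) * A + B)\<^sup>2 = (1 - \<Theta>) * (\<Theta> * A - B)\<^sup>2"
      by (simp add: power2_eq_square algebra_simps)
    moreover have "(1 - \<Theta>) * (\<Theta> * A - B)\<^sup>2 \<ge> 0" using assms by simp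
    ultimately show ?thesis by linarith
  qed
  then have "((1 - \<Theta>) * A + B)\<^sup>2 \<le> (\<Theta> * ((1 - \<Theta>) * A\<^sup>2) + B\<^sup>2) / \<Theta>"
    using assms by (simp add: field_simps)
  also have "\<dots> = (1 - \<Theta>) * A\<^sup>2 + B\<^sup>2 / \<Theta>" using assms by (simp add: field_simps)
  finally show ?thesis .
qed

lemma W_bound:
  fixes \<theta> \<gamma> :: "nat \<Rightarrow> real"
  assumes p2: "p \<ge> 2" and gam: "\<And>t. t \<in> {1..p-1} \<Longrightarrow> 0 < \<gamma> t \<and> \<gamma> t < 1"
    and Th: "0 \<le> 1 - sum \<theta> {1..p-1}" "1 - sum \<theta> {1..p-1} \<le> 1"
  shows "((1 - sum \<theta> {1..p-1}) + (\<Sum>t\<in>{1..p-1}. \<bar>\<theta> t\<bar> * ((1 - \<gamma> t) / \<gamma> t) ^ p))\<^sup>2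
     \<le> real p * (1 + (\<Sum>t\<in>{1..p-1}. (\<theta> t)\<^sup>2 / \<gamma> t ^ (2 * p)))"
proof -
  define b where "b j = (if j = 0 then 1 - sum \<theta> {1..p-1} else \<bar>\<theta> j\<bar> * ((1 - \<gamma> j) / \<gamma> j) ^ p)" for j
  have split: "(\<Sum>j\<in>{0..p-1}. h j) = h 0 + (\<Sum>j\<in>{1..p-1}. h j)" for h :: "nat \<Rightarrow> real"
    by (subst sum.atLeast_Suc_atMost) auto
  have sb: "(\<Sum>j\<in>{0..p-1}. b j) = (1 - sum \<theta> {1..p-1}) + (\<Sum>t\<in>{1..p-1}. \<bar>\<theta> t\<bar> * ((1 - \<gamma> t) / \<gamma> t) ^ p)"
    unfolding split b_def by simp
  have card: "card {0..p-1} = p" using p2 by simp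
  have h1: "(\<Sum>j\<in>{0..p-1}. b j)\<^sup>2 \<le> (\<Sum>j\<in>{0..p-1}. (b j)\<^sup>2) * real (card {0..p-1})"
    by (rule sum_squared_le_sum_of_squares)
  have h2: "(\<Sum>j\<in>{0..p-1}. (b j)\<^sup>2) \<le> 1 + (\<Sum>t\<in>{1..p-1}. (\<theta> t)\<^sup>2 / \<gamma> t ^ (2 * p))"
  proof -
    have "(\<Sum>j\<in>{0..p-1}. (b j)\<^sup>2) = (1 - sum \<theta> {1..p-1})\<^sup>2 + (\<Sum>t\<in>{1..p-1}. (\<bar>\<theta> t\<bar> * ((1 - \<gamma> t) / \<gamma> t) ^ p)\<^sup>2)"
      unfolding split b_def by simp
    also have "\<dots> \<le> 1 + (\<Sum>t\<in>{1..p-1}. (\<theta> t)\<^sup>2 / \<gamma> t ^ (2 * p))"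
    proof (rule add_mono)
      show "(1 - sum \<theta> {1..p-1})\<^sup>2 \<le> 1" using Th by (simp add: power_le_one)
      show "(\<Sum>t\<in>{1..p-1}. (\<bar>\<theta> t\<bar> * ((1 - \<gamma> t) / \<gamma> t) ^ p)\<^sup>2) \<le> (\<Sum>t\<in>{1..p-1}. (\<theta> t)\<^sup>2 / \<gamma> t ^ (2 * p))"
      proof (rule sum_mono)
        fix t assume t: "t \<in> {1..p-1}"
        have g: "0 < \<gamma> t" "\<gamma> t < 1" using gam[OF t] by auto
        have c0: "0 \<le> (1 - \<gamma> t) / \<gamma> t" using g by simp
        have c1: "(1 - \<gamma> t) / \<gamma> t \<le> 1 / \<gamma> t" using g by (simp add: divide_right_mono)
        have "((1 - \<gamma> t) / \<gamma> t) ^ (2 * p) \<le> (1 / \<gamma> t) ^ (2 * p)"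
          by (rule power_mono[OF c1 c0])
        then have "(\<theta> t)\<^sup>2 * ((1 - \<gamma> t) / \<gamma> t) ^ (2 * p) \<le> (\<theta> t)\<^sup>2 * (1 / \<gamma> t) ^ (2 * p)"
          by (rule mult_left_mono) simp
        moreover have "(\<bar>\<theta> t\<bar> * ((1 - \<gamma> t) / \<gamma> t) ^ p)\<^sup>2 = (\<theta> t)\<^sup>2 * ((1 - \<gamma> t) / \<gamma> t) ^ (2 * p)"
          by (simp add: power_mult_distrib power_mult[symmetric] mult.commute)
        moreover have "(\<theta> t)\<^sup>2 * (1 / \<gamma> t) ^ (2 * p) = (\<theta> t)\<^sup>2 / \<gamma> t ^ (2 * p)"
          by (simp add: power_one_over)
        ultimately show "(\<bar>\<theta> t\<bar> * ((1 - \<gamma> t) / \<gamma> t) ^ p)\<^sup>2 \<le> (\<theta> t)\<^sup>2 / \<gamma> t ^ (2 * p)" by simp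
      qed
    qed
    finally show ?thesis .
  qed
  have "(\<Sum>j\<in>{0..p-1}. (b j)\<^sup>2) * real p \<le> (1 + (\<Sum>t\<in>{1..p-1}. (\<theta> t)\<^sup>2 / \<gamma> t ^ (2 * p))) * real p"
    using h2 by (rule mult_right_mono) simp
  with h1 show ?thesis unfolding sb card by (simp add: mult.commute)
qed

theorem theorem3p7:
  fixes f :: "'a::euclidean_space \<Rightarrow> real"
    and gradf :: "'a \<Rightarrow> 'a"
    and M :: "'c measure"
    and G :: "'a \<Rightarrow> 'c \<Rightarrow> 'a"
    and flow L1 Lp \<sigma> :: real
    and p :: nat
    and x0 :: 'a
    and \<eta> :: "nat \<Rightarrow> real"
    and gam th :: "nat \<Rightarrow> nat \<Rightarrow> real"
    and pp :: "nat \<Rightarrow> real"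
    and s :: "nat \<Rightarrow> 'c"
    and k :: nat
  assumes probM: "prob_space M"
    and grad: "\<And>x. (f has_derivative (\<lambda>h. gradf x \<bullet> h)) (at x)"
    and A_low: "\<And>x. f x \<ge> flow"
    and A_L1: "L1 > 0" "\<And>x y. norm (gradf y - gradf x) \<le> L1 * norm (y - x)"
    and A_unb: "\<And>x. integrable M (G x)" "\<And>x. (\<integral>\<xi>. G x \<xi> \<partial>M) = gradf x"
    and A_var: "\<sigma> > 0" "\<And>x. integrable M (\<lambda>\<xi>. (norm (G x \<xi> - gradf x))\<^sup>2)"
      "\<And>x. (\<integral>\<xi>. (norm (G x \<xi> - gradf x))\<^sup>2 \<partial>M) \<le> \<sigma>\<^sup>2"
    and B_p: "p \<ge> 2" and B_Cp: "Cp p f" and B_Lp: "Lp > 0"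
      "\<And>x y. pnorm p (\<lambda>h. hderiv p f y h - hderiv p f x h) \<le> Lp * norm (y - x)"
    and eta_pos: "\<And>j. \<eta> j > 0"
    and gam_range: "\<And>j t. t \<in> {1..p-1} \<Longrightarrow> gam j t > 0 \<and> gam j t < 1"
    and th_sum: "\<And>j. (\<Sum>t\<in>{1..p-1}. th j t) > 0 \<and> (\<Sum>t\<in>{1..p-1}. th j t) < 1"
    and th_moment: "\<And>j i. i \<in> {1..p-1} \<Longrightarrow> (\<Sum>t\<in>{1..p-1}. th j t / gam j t ^ i) = 1"
    and pp_pos: "\<And>j. pp j > 0"
    and pp_rec: "\<And>j. (1 - (\<Sum>t\<in>{1..p-1}. th j t)) * pp (Suc j)
                    \<le> (1 - (1 / (real p + 1)) * (\<Sum>t\<in>{1..p-1}. th j t)) * pp j"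
    and s_in: "\<And>j. s j \<in> space M"
    and m_nz: "\<And>j. j \<le> k \<Longrightarrow> mseq G x0 \<eta> (p-1) gam th s j \<noteq> 0"
  shows
    "(let X = xseq G x0 \<eta> (p-1) gam th;
          Mo = mseq G x0 \<eta> (p-1) gam th;
          P = (\<lambda>j s'. f (X s' j) + pp j * (norm (Mo s' j - gradf (X s' j)))\<^sup>2);
          \<Theta> = (\<Sum>t\<in>{1..p-1}. th k t)
      in (\<integral>\<xi>. P (Suc k) (s(Suc k := \<xi>)) \<partial>M)
         \<le> P k s - \<eta> k * norm (gradf (X s k)) + L1 / 2 * (\<eta> k)\<^sup>2
           + (real p + 1) * (\<eta> k)\<^sup>2 / (pp k * \<Theta>)
           + real p * Lp\<^sup>2 * \<eta> k ^ (2 * p) * pp (Suc k) / ((fact p)\<^sup>2 * \<Theta>)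
               * (1 + (\<Sum>t\<in>{1..p-1}. (th k t)\<^sup>2 / gam k t ^ (2 * p)))
           + (real p - 1) * \<sigma>\<^sup>2 * pp (Suc k) * (\<Sum>t\<in>{1..p-1}. (th k t)\<^sup>2))"
proof -
  let ?As = "alg_state G x0 \<eta> (p-1) gam th"
  obtain x xp mp where st: "?As s k = (x, xp, mp)" by (cases "?As s k") auto
  define m where "m = mom_step G (p-1) gam th k (s k) x xp mp"
  have Xk: "xseq G x0 \<eta> (p-1) gam th s k = x" unfolding xseq_def st by simp
  have Mk: "mseq G x0 \<eta> (p-1) gam th s k = m" unfolding mseq_def st m_def by simp
  have mnz: "m \<noteq> 0" using m_nz[of k] Mk by simp
  define et where "et = \<eta> k"
  have etpos: "et > 0" using eta_pos by (simp add: et_def)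
  define u where "u = (- (1 / norm m)) *\<^sub>R m"
  define y where "y = x + et *\<^sub>R u"
  have nu: "norm u = 1" using mnz by (simp add: u_def)
  have yeq: "x - (\<eta> k / norm m) *\<^sub>R m = y"
    by (simp add: y_def u_def et_def divide_inverse)
  have stS: "?As s (Suc k) = (y, x, m)"
    using yeq unfolding alg_state.simps(2) st by (simp add: m_def Let_def)
  have st': "?As (s(Suc k := \<xi>)) (Suc k) = (y, x, m)" for \<xi>
  proof -
    have "?As (s(Suc k := \<xi>)) (Suc k) = ?As s (Suc k)"
      by (rule alg_agree) simp
    then show ?thesis using stS by simp
  qed
  have Xs': "xseq G x0 \<eta> (p-1) gam th (s(Suc k := \<xi>)) (Suc k) = y" for \<xi>
    unfolding xseq_def st' by simp
  have Ms': "mseq G x0 \<eta> (p-1) gam th (s(Suc k := \<xi>)) (Suc k) = mom_step G (p-1) gam th (Suc k) \<xi> y x m" for \<xi>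
    unfolding mseq_def st' by simp
  define S where "S = {1..p-1}"
  define \<theta> where "\<theta> = th k"
  define \<gamma> where "\<gamma> = gam k"
  define \<Theta> where "\<Theta> = sum \<theta> S"
  have ThS: "(\<Sum>t\<in>{1..p-1}. th k t) = \<Theta>" by (simp add: \<Theta>_def S_def \<theta>_def)
  have Th01: "0 < \<Theta>" "\<Theta> < 1" using th_sum[of k] ThS by auto
  define c where "c t = (1 - \<gamma> t) / \<gamma> t" for t
  define z where "z t = y + (c t * et) *\<^sub>R u" for t
  define e where "e = m - gradf x"
  define Rv where "Rv = (1 - \<Theta>) *\<^sub>R (gradf (y + (- et) *\<^sub>R u) - gradf y) + (\<Sum>t\<in>S. \<theta> t *\<^sub>R (gradf (z t) - gradf y))"
  define a where "a = (1 - \<Theta>) *\<^sub>R e + Rv"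
  define N where "N \<xi> = (\<Sum>t\<in>S. \<theta> t *\<^sub>R (G (z t) \<xi> - gradf (z t)))" for \<xi>
  have xeq: "y + (- et) *\<^sub>R u = x" by (simp add: y_def)
  have mom_eq: "mom_step G (p-1) gam th (Suc k) \<xi> y x m - gradf y = a + N \<xi>" for \<xi>
  proof -
    have zz: "y + ((1 - gprev gam (Suc k) t) / gprev gam (Suc k) t) *\<^sub>R (y - x) = z t" for t
      by (simp add: gprev_def z_def c_def \<gamma>_def y_def)
    have "mom_step G (p-1) gam th (Suc k) \<xi> y x m = (1 - \<Theta>) *\<^sub>R m + (\<Sum>t\<in>S. \<theta> t *\<^sub>R G (z t) \<xi>)"
      unfolding mom_step_def zz by (simp add: tprev_def \<Theta>_def S_def \<theta>_def)
    moreover have "\<Theta> *\<^sub>R gradf y = (\<Sum>t\<in>S. \<theta> t *\<^sub>R gradf y)"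
      by (simp add: \<Theta>_def scaleR_sum_left)
    ultimately show ?thesis
      unfolding a_def Rv_def e_def N_def xeq
      by (simp add: algebra_simps sum.distrib sum_subtractf)
  qed
  have fin: "finite S" by (simp add: S_def)
  have cardS: "real (card S) = real p - 1" using B_p by (simp add: S_def of_nat_diff)
  have noiseR: "integrable M (\<lambda>\<xi>. (norm (a + N \<xi>))\<^sup>2) \<and>
      (\<integral>\<xi>. (norm (a + N \<xi>))\<^sup>2 \<partial>M) \<le> (norm a)\<^sup>2 + real (card S) * \<sigma>\<^sup>2 * (\<Sum>t\<in>S. (\<theta> t)\<^sup>2)"
    unfolding N_def by (rule noise[OF probM fin A_unb(1) A_unb(2) A_var(2) A_var(3)])
  define I where "I = (\<integral>\<xi>. (norm (a + N \<xi>))\<^sup>2 \<partial>M)"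
  have FM: "finite_measure M" using probM by (simp add: prob_space_def)
  have one: "measure M (space M) = 1" using probM by (simp add: prob_space.prob_space)
  have Ieq: "(\<integral>\<xi>. f y + pp (Suc k) * (norm (a + N \<xi>))\<^sup>2 \<partial>M) = f y + pp (Suc k) * I"
  proof -
    have i2: "integrable M (\<lambda>\<xi>. pp (Suc k) * (norm (a + N \<xi>))\<^sup>2)"
      using noiseR by (intro Bochner_Integration.integrable_mult_right) auto
    show ?thesis
      apply (subst Bochner_Integration.integral_add[OF finite_measure.integrable_const[OF FM] i2])
      by (simp add: one I_def)
  qed
  define E where "E = norm e"
  define Rn where "Rn = norm Rv"
  define g where "g = norm (gradf x)"
  define Sg where "Sg = (\<Sum>t\<in>S. (\<theta> t)\<^sup>2 / \<gamma> t ^ (2 * p))"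
  define Sq where "Sq = (\<Sum>t\<in>S. (\<theta> t)\<^sup>2)"
  define pp1 where "pp1 = pp (Suc k)"
  define ppk where "ppk = pp k"
  have pp1pos: "pp1 > 0" and ppkpos: "ppk > 0" using pp_pos by (auto simp: pp1_def ppk_def)
  have I1: "I \<le> (norm a)\<^sup>2 + (real p - 1) * \<sigma>\<^sup>2 * Sq"
    using noiseR cardS by (simp add: I_def Sq_def)
  have A2: "(norm a)\<^sup>2 \<le> (1 - \<Theta>) * E\<^sup>2 + Rn\<^sup>2 / \<Theta>"
  proof -
    have "norm a \<le> (1 - \<Theta>) * E + Rn"
      unfolding a_def E_def Rn_def using Th01
      by (metis abs_of_nonneg diff_ge_0_iff_ge less_imp_le norm_scaleR norm_triangle_ineq)
    then have "(norm a)\<^sup>2 \<le> ((1 - \<Theta>) * E + Rn)\<^sup>2" by (intro power_mono) auto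
    also have "\<dots> \<le> (1 - \<Theta>) * E\<^sup>2 + Rn\<^sup>2 / \<Theta>"
      using Th01 by (intro sq_convex) (auto simp: E_def)
    finally show ?thesis .
  qed
  define W where "W = (1 - \<Theta>) + (\<Sum>t\<in>S. \<bar>\<theta> t\<bar> * c t ^ p)"
  have Rb: "Rn \<le> Lp * et ^ p / fact p * W"
  proof -
    have "norm ((1 - sum \<theta> {1..p-1}) *\<^sub>R (gradf (y + (- et) *\<^sub>R u) - gradf y)
      + (\<Sum>t\<in>{1..p-1}. \<theta> t *\<^sub>R (gradf (y + ((1 - \<gamma> t) / \<gamma> t * et) *\<^sub>R u) - gradf y)))
     \<le> Lp * et ^ p / fact p * ((1 - sum \<theta> {1..p-1}) + (\<Sum>t\<in>{1..p-1}. \<bar>\<theta> t\<bar> * ((1 - \<gamma> t) / \<gamma> t) ^ p))"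
    proof (rule remainder_bound[OF B_Cp B_p grad B_Lp(2) nu etpos])
      show "0 < \<gamma> t \<and> \<gamma> t < 1" if "t \<in> {1..p-1}" for t using gam_range[OF that] by (simp add: \<gamma>_def)
      show "(\<Sum>t\<in>{1..p-1}. \<theta> t / \<gamma> t ^ i) = 1" if "i \<in> {1..p-1}" for i
        using th_moment[OF that] by (simp add: \<gamma>_def \<theta>_def)
      show "sum \<theta> {1..p-1} \<le> 1" using Th01 by (simp add: \<Theta>_def S_def)
    qed
    then show ?thesis unfolding Rn_def Rv_def W_def \<Theta>_def S_def z_def c_def .
  qed
  have W2: "W\<^sup>2 \<le> real p * (1 + Sg)"
    unfolding W_def Sg_def \<Theta>_def S_def c_def
    by (rule W_bound[OF B_p]) (use gam_range Th01 in \<open>auto simp: \<gamma>_def \<Theta>_def S_def\<close>)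
  define K where "K = (Lp * et ^ p / fact p)\<^sup>2 * (real p * (1 + Sg))"
  have RK: "Rn\<^sup>2 \<le> K"
  proof -
    have "Rn\<^sup>2 \<le> (Lp * et ^ p / fact p * W)\<^sup>2" using Rb by (intro power_mono) (auto simp: Rn_def)
    also have "\<dots> = (Lp * et ^ p / fact p)\<^sup>2 * W\<^sup>2" by (rule power_mult_distrib)
    also have "\<dots> \<le> K" unfolding K_def using W2 by (intro mult_left_mono) auto
    finally show ?thesis .
  qed
  have fy: "f y \<le> f x - et * g + 2 * et * E + L1 / 2 * et\<^sup>2"
  proof -
    have d1: "f y \<le> f x + gradf x \<bullet> (et *\<^sub>R u) + L1 / 2 * (norm (et *\<^sub>R u))\<^sup>2"
      unfolding y_def by (rule descent[OF grad A_L1(2)])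
    have d2: "norm (et *\<^sub>R u) = et" using nu etpos by simp
    have d3: "gradf x \<bullet> (et *\<^sub>R u) = et * (- (gradf x \<bullet> m) / norm m)"
      by (simp add: u_def inner_scaleR_right)
    have d4: "- (gradf x \<bullet> m) / norm m \<le> - g + 2 * E"
      using direction[OF mnz, of "gradf x"] by (simp add: g_def E_def e_def)
    have d5: "et * (- (gradf x \<bullet> m) / norm m) \<le> et * (- g + 2 * E)"
      using d4 etpos by (intro mult_left_mono) auto
    have d6: "et * (- g + 2 * E) = - et * g + 2 * et * E" by (simp add: algebra_simps)
    show ?thesis using d1 d5 d6 unfolding d2 d3 by linarith
  qed
  have B5: "pp1 * (1 - \<Theta>) \<le> ppk - \<Theta> * ppk / (real p + 1)"
    using pp_rec[of k] ThS by (simp add: pp1_def ppk_def algebra_simps)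
  have B6: "2 * et * E \<le> \<Theta> * ppk * E\<^sup>2 / (real p + 1) + (real p + 1) * et\<^sup>2 / (ppk * \<Theta>)"
  proof -
    define \<alpha> where "\<alpha> = \<Theta> * ppk / (real p + 1)"
    have ap: "\<alpha> > 0" using Th01 ppkpos by (simp add: \<alpha>_def)
    have "\<alpha> * E\<^sup>2 + et\<^sup>2 / \<alpha> - 2 * et * E = (\<alpha> * E - et)\<^sup>2 / \<alpha>"
      using ap by (simp add: field_simps power2_eq_square)
    moreover have "(\<alpha> * E - et)\<^sup>2 / \<alpha> \<ge> 0" using ap by simp
    moreover have "et\<^sup>2 / \<alpha> = (real p + 1) * et\<^sup>2 / (ppk * \<Theta>)" by (simp add: \<alpha>_def mult.commute)
    moreover have "\<alpha> * E\<^sup>2 = \<Theta> * ppk * E\<^sup>2 / (real p + 1)" by (simp add: \<alpha>_def)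
    ultimately show ?thesis by linarith
  qed
  have Kt: "pp1 * (K / \<Theta>) = real p * Lp\<^sup>2 * et ^ (2 * p) * pp1 / ((fact p)\<^sup>2 * \<Theta>) * (1 + Sg)"
    by (simp add: K_def power_mult_distrib power_divide power_mult[symmetric] mult.commute)
  have step1: "pp1 * I \<le> pp1 * ((1 - \<Theta>) * E\<^sup>2) + pp1 * (K / \<Theta>) + pp1 * ((real p - 1) * \<sigma>\<^sup>2 * Sq)"
  proof -
    have "Rn\<^sup>2 / \<Theta> \<le> K / \<Theta>" using RK Th01 by (simp add: divide_right_mono)
    then have "I \<le> (1 - \<Theta>) * E\<^sup>2 + K / \<Theta> + (real p - 1) * \<sigma>\<^sup>2 * Sq" using I1 A2 by linarith
    then have "pp1 * I \<le> pp1 * ((1 - \<Theta>) * E\<^sup>2 + K / \<Theta> + (real p - 1) * \<sigma>\<^sup>2 * Sq)"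
      using pp1pos by (intro mult_left_mono) auto
    then show ?thesis by (simp only: distrib_left)
  qed
  have step2: "pp1 * ((1 - \<Theta>) * E\<^sup>2) \<le> (ppk - \<Theta> * ppk / (real p + 1)) * E\<^sup>2"
    using mult_right_mono[OF B5, of "E\<^sup>2"] by (simp add: mult.assoc)
  have final: "f y + pp1 * I \<le> f x + ppk * E\<^sup>2 - et * g + L1 / 2 * et\<^sup>2 + (real p + 1) * et\<^sup>2 / (ppk * \<Theta>)
      + real p * Lp\<^sup>2 * et ^ (2 * p) * pp1 / ((fact p)\<^sup>2 * \<Theta>) * (1 + Sg) + (real p - 1) * \<sigma>\<^sup>2 * pp1 * Sq"
  proof -
    have "(ppk - \<Theta> * ppk / (real p + 1)) * E\<^sup>2 = ppk * E\<^sup>2 - \<Theta> * ppk * E\<^sup>2 / (real p + 1)"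
      by (simp add: algebra_simps)
    moreover have "pp1 * ((real p - 1) * \<sigma>\<^sup>2 * Sq) = (real p - 1) * \<sigma>\<^sup>2 * pp1 * Sq" by simp
    ultimately show ?thesis using step1 step2 fy B6 Kt by linarith
  qed
  have ThS2: "sum (th k) {Suc 0..p - Suc 0} = \<Theta>" by (simp add: \<Theta>_def S_def \<theta>_def)
  show ?thesis
    unfolding Let_def Xs' Ms' Xk Mk mom_eq Ieq
    using final
    by (simp add: pp1_def ppk_def E_def e_def g_def et_def Sg_def Sq_def S_def \<theta>_def \<gamma>_def ThS ThS2)
qed

end
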